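(* Let $G$ be a graph whose $\operatorname{IR}$-graph $H=G(\operatorname{IR})$ is connected, and let $k\geq 3$. If $G$ has an $\operatorname{IR}(G)$-set $X$ containing $k$ vertices each of positive degree in $G[X]$, or containing $k$ vertices each having an $X$-external private neighbour, then $\operatorname{diam}(H)\geq k$.
   Context: All graphs are finite and simple. For $G=(V,E)$, $D\subseteq V$, $v\in D$: $\operatorname{PN}(v,D)=N[v]-N[D-\{v\}]$ and $\operatorname{EPN}(v,D)=\operatorname{PN}(v,D)-D$; elements of $\operatorname{EPN}(v,D)$ are the $D$-external private neighbours of $v$. $D$ is irredundant if $\operatorname{PN}(v,D)\neq\varnothing$ for all $v\in D$; $\operatorname{IR}(G)$ is the maximum size of an irredundant set; an $\operatorname{IR}(G)$-set is an irredundant set of that size. $G(\operatorname{IR})$ has the $\operatorname{IR}(G)$-sets as vertices, with $D\sim D'$ iff there exist $u\in D$, $v\in D'$ with $uv\in E(G)$ and $D'=(D-\{u\})\cup\{v\}$. *)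

theory Defs
  imports Main
begin

definition simple_graph :: "'a set \<Rightarrow> ('a \<Rightarrow> 'a \<Rightarrow> bool) \<Rightarrow> bool" where
  "simple_graph V E \<longleftrightarrow> finite V \<and> (\<forall>x y. E x y \<longrightarrow> E y x)
     \<and> (\<forall>x. \<not> E x x) \<and> (\<forall>x y. E x y \<longrightarrow> x \<in> V \<and> y \<in> V)"

definition cnbhd :: "'a set \<Rightarrow> ('a \<Rightarrow> 'a \<Rightarrow> bool) \<Rightarrow> 'a \<Rightarrow> 'a set" where
  "cnbhd V E v = insert v {u \<in> V. E v u}"

definition cnbhd_set :: "'a set \<Rightarrow> ('a \<Rightarrow> 'a \<Rightarrow> bool) \<Rightarrow> 'a set \<Rightarrow> 'a set" where
  "cnbhd_set V E S = (\<Union>v\<in>S. cnbhd V E v)"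

definition PN :: "'a set \<Rightarrow> ('a \<Rightarrow> 'a \<Rightarrow> bool) \<Rightarrow> 'a \<Rightarrow> 'a set \<Rightarrow> 'a set" where
  "PN V E v D = cnbhd V E v - cnbhd_set V E (D - {v})"

definition EPN :: "'a set \<Rightarrow> ('a \<Rightarrow> 'a \<Rightarrow> bool) \<Rightarrow> 'a \<Rightarrow> 'a set \<Rightarrow> 'a set" where
  "EPN V E v D = PN V E v D - D"

definition irredundant :: "'a set \<Rightarrow> ('a \<Rightarrow> 'a \<Rightarrow> bool) \<Rightarrow> 'a set \<Rightarrow> bool" where
  "irredundant V E D \<longleftrightarrow> D \<subseteq> V \<and> (\<forall>v\<in>D. PN V E v D \<noteq> {})"

definition IR :: "'a set \<Rightarrow> ('a \<Rightarrow> 'a \<Rightarrow> bool) \<Rightarrow> nat" where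
  "IR V E = Max {card D | D. irredundant V E D}"

definition IR_set :: "'a set \<Rightarrow> ('a \<Rightarrow> 'a \<Rightarrow> bool) \<Rightarrow> 'a set \<Rightarrow> bool" where
  "IR_set V E D \<longleftrightarrow> irredundant V E D \<and> card D = IR V E"

definition IR_graph_vertices :: "'a set \<Rightarrow> ('a \<Rightarrow> 'a \<Rightarrow> bool) \<Rightarrow> 'a set set" where
  "IR_graph_vertices V E = {D. IR_set V E D}"

definition IR_graph_adj :: "('a \<Rightarrow> 'a \<Rightarrow> bool) \<Rightarrow> 'a set \<Rightarrow> 'a set \<Rightarrow> bool" where
  "IR_graph_adj E D D' \<longleftrightarrow> (\<exists>u\<in>D. \<exists>v\<in>D'. E u v \<and> D' = (D - {u}) \<union> {v})"

definition is_walk :: "'b set \<Rightarrow> ('b \<Rightarrow> 'b \<Rightarrow> bool) \<Rightarrow> 'b list \<Rightarrow> bool" where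
  "is_walk W R xs \<longleftrightarrow> xs \<noteq> [] \<and> set xs \<subseteq> W \<and> (\<forall>i. Suc i < length xs \<longrightarrow> R (xs ! i) (xs ! Suc i))"

definition walk_between :: "'b set \<Rightarrow> ('b \<Rightarrow> 'b \<Rightarrow> bool) \<Rightarrow> 'b \<Rightarrow> 'b \<Rightarrow> nat \<Rightarrow> bool" where
  "walk_between W R x y n \<longleftrightarrow> (\<exists>xs. is_walk W R xs \<and> hd xs = x \<and> last xs = y \<and> length xs = Suc n)"

definition graph_connected :: "'b set \<Rightarrow> ('b \<Rightarrow> 'b \<Rightarrow> bool) \<Rightarrow> bool" where
  "graph_connected W R \<longleftrightarrow> (\<forall>x\<in>W. \<forall>y\<in>W. \<exists>n. walk_between W R x y n)"

definition graph_dist :: "'b set \<Rightarrow> ('b \<Rightarrow> 'b \<Rightarrow> bool) \<Rightarrow> 'b \<Rightarrow> 'b \<Rightarrow> nat" where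
  "graph_dist W R x y = (LEAST n. walk_between W R x y n)"

definition graph_diam :: "'b set \<Rightarrow> ('b \<Rightarrow> 'b \<Rightarrow> bool) \<Rightarrow> nat" where
  "graph_diam W R = Max {graph_dist W R x y | x y. x \<in> W \<and> y \<in> W}"

end

theory Submission
  imports Defs
begin

lemma adj_card_le:
  assumes "IR_graph_adj E D D'"
  shows "card (D - D') \<le> 1"
proof -
  from assms obtain u v where "u \<in> D" "D' = (D - {u}) \<union> {v}"
    unfolding IR_graph_adj_def by blast
  then have "D - D' \<subseteq> {u}" by blast
  then show ?thesis
    by (metis card.empty card.insert empty_iff finite.intros(1) insert_absorb le_numeral_extra(4) subset_singletonD zero_le_one One_nat_def)
qed

lemma walk_card:
  "xs \<noteq> [] \<Longrightarrow> (\<forall>x\<in>set xs. finite x) \<Longrightarrow>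
   (\<forall>i. Suc i < length xs \<longrightarrow> IR_graph_adj E (xs ! i) (xs ! Suc i)) \<Longrightarrow>
   card (hd xs - last xs) \<le> length xs - 1"
proof (induction xs)
  case Nil
  then show ?case by simp
next
  case (Cons a ys)
  show ?case
  proof (cases "ys = []")
    case True
    then show ?thesis by simp
  next
    case False
    have adj: "\<forall>i. Suc i < length ys \<longrightarrow> IR_graph_adj E (ys ! i) (ys ! Suc i)"
      using Cons.prems(3) by (metis Suc_less_eq length_Cons nth_Cons_Suc)
    have IH: "card (hd ys - last ys) \<le> length ys - 1"
      using Cons.IH[OF False] Cons.prems(2) adj by simp
    have "IR_graph_adj E a (hd ys)"
      using Cons.prems(3)[rule_format, of 0] False by (simp add: hd_conv_nth)
    then have c1: "card (a - hd ys) \<le> 1" by (rule adj_card_le)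
    have fa: "finite a" using Cons.prems(2) by simp
    have "card (a - last ys) \<le> card ((a - hd ys) \<union> (hd ys - last ys))"
    proof (rule card_mono)
      show "finite ((a - hd ys) \<union> (hd ys - last ys))"
        using fa Cons.prems(2) False by simp
    qed blast
    also have "\<dots> \<le> card (a - hd ys) + card (hd ys - last ys)" by (rule card_Un_le)
    also have "\<dots> \<le> 1 + (length ys - 1)" using c1 IH by simp
    finally show ?thesis using False by simp
  qed
qed

theorem corollary4p4:
  fixes V :: "'a set" and E :: "'a \<Rightarrow> 'a \<Rightarrow> bool" and k :: nat and X :: "'a set"
  assumes "simple_graph V E"
    and "graph_connected (IR_graph_vertices V E) (IR_graph_adj E)"
    and "k \<ge> 3"
    and "IR_set V E X"
    and "(\<exists>S \<subseteq> X. card S = k \<and> (\<forall>v\<in>S. \<exists>u\<in>X. E v u))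
       \<or> (\<exists>S \<subseteq> X. card S = k \<and> (\<forall>v\<in>S. EPN V E v X \<noteq> {}))"
  shows "graph_diam (IR_graph_vertices V E) (IR_graph_adj E) \<ge> k"
proof -
  let ?W = "IR_graph_vertices V E"
  let ?R = "IR_graph_adj E"
  have fV: "finite V" and sym: "\<And>x y. E x y \<Longrightarrow> E y x" and irr: "\<And>x. \<not> E x x"
    and inV: "\<And>x y. E x y \<Longrightarrow> x \<in> V \<and> y \<in> V"
    using assms(1) unfolding simple_graph_def by auto
  have irrX: "irredundant V E X" and cX: "card X = IR V E"
    using assms(4) unfolding IR_set_def by auto
  have XV: "X \<subseteq> V" using irrX unfolding irredundant_def by auto
  have fX: "finite X" using XV fV finite_subset by blast
  have PNX: "\<And>v. v \<in> X \<Longrightarrow> PN V E v X \<noteq> {}" using irrX unfolding irredundant_def by auto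
  \<comment> \<open>case 1 implies case 2\<close>
  have epn1: "EPN V E v X \<noteq> {}" if "v \<in> X" "u \<in> X" "E v u" for v u
  proof -
    have "u \<noteq> v" using irr that by auto
    have "PN V E v X \<inter> X = {}"
    proof (rule ccontr)
      assume "PN V E v X \<inter> X \<noteq> {}"
      then obtain x where x: "x \<in> PN V E v X" "x \<in> X" by blast
      show False
      proof (cases "x = v")
        case True
        have "v \<in> cnbhd V E u" using sym[OF that(3)] inV[OF that(3)] unfolding cnbhd_def by auto
        then have "v \<in> cnbhd_set V E (X - {v})" using that(2) \<open>u \<noteq> v\<close> unfolding cnbhd_set_def by auto
        then show False using x True unfolding PN_def by auto
      next
        case False
        have "x \<in> cnbhd V E x" unfolding cnbhd_def by auto
        then have "x \<in> cnbhd_set V E (X - {v})" using x(2) False unfolding cnbhd_set_def by auto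
        then show False using x unfolding PN_def by auto
      qed
    qed
    then show ?thesis using PNX[OF that(1)] unfolding EPN_def by blast
  qed
  obtain S where S: "S \<subseteq> X" "card S = k" "\<forall>v\<in>S. EPN V E v X \<noteq> {}"
    using assms(5) epn1 by blast
  define T where "T = {v \<in> X. EPN V E v X \<noteq> {}}"
  have ST: "S \<subseteq> T" using S unfolding T_def by auto
  have fT: "finite T" using fX unfolding T_def by auto
  have kT: "k \<le> card T" using S(2) card_mono[OF fT ST] by simp
  define f where "f v = (SOME w. w \<in> EPN V E v X)" for v
  have fe: "f v \<in> EPN V E v X" if "v \<in> T" for v
    using that unfolding T_def f_def by (auto intro: someI_ex)
  have epn_nb: "w \<in> cnbhd V E v" "w \<notin> X" "\<And>y. y \<in> X \<Longrightarrow> y \<noteq> v \<Longrightarrow> w \<notin> cnbhd V E y"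
    if "w \<in> EPN V E v X" for w v
    using that unfolding EPN_def PN_def cnbhd_set_def by auto
  have fnX: "f v \<notin> X" if "v \<in> T" for v using epn_nb(2)[OF fe[OF that]] .
  have fE: "E v (f v)" "f v \<in> V" if "v \<in> T" for v
  proof -
    have "f v \<in> cnbhd V E v" using epn_nb(1)[OF fe[OF that]] .
    moreover have "f v \<noteq> v" using fnX[OF that] that unfolding T_def by (metis (no_types, lifting) mem_Collect_eq)
    ultimately show "E v (f v)" "f v \<in> V" unfolding cnbhd_def by auto
  qed
  have fpriv: "\<not> E y (f v)" "y \<noteq> f v" if "v \<in> T" "y \<in> X" "y \<noteq> v" for v y
    using epn_nb(3)[OF fe[OF that(1)] that(2,3)] fE(2)[OF that(1)] unfolding cnbhd_def by auto
  have finj: "inj_on f T"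
  proof (rule inj_onI)
    fix v v' assume "v \<in> T" "v' \<in> T" "f v = f v'"
    show "v = v'"
    proof (rule ccontr)
      assume "v \<noteq> v'"
      have "v' \<in> X" using \<open>v' \<in> T\<close> unfolding T_def by auto
      then have "\<not> E v' (f v)" using fpriv(1)[OF \<open>v \<in> T\<close>] \<open>v \<noteq> v'\<close> by auto
      then show False using fE(1)[OF \<open>v' \<in> T\<close>] \<open>f v = f v'\<close> by simp
    qed
  qed
  have iso: "\<not> E y x" if "y \<in> X - T" "x \<in> X" for x y
    using epn1[of y x] that unfolding T_def by auto
  define Y where "Y = (X - T) \<union> f ` T"
  have TX: "T \<subseteq> X" unfolding T_def by auto
  have disj: "(X - T) \<inter> f ` T = {}" using fnX by auto
  have cY: "card Y = card X"
  proof -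
    have "card Y = card (X - T) + card (f ` T)"
      unfolding Y_def using disj fX fT by (simp add: card_Un_disjoint)
    also have "\<dots> = card (X - T) + card T" using card_image[OF finj] by simp
    also have "\<dots> = card X" using card_Diff_subset[OF fT TX] card_mono[OF fX TX] by simp
    finally show ?thesis .
  qed
  have YV: "Y \<subseteq> V" unfolding Y_def using XV fE(2) by auto
  have irrY: "irredundant V E Y"
    unfolding irredundant_def
  proof (intro conjI ballI)
    show "Y \<subseteq> V" by (rule YV)
    fix z assume "z \<in> Y"
    then consider (a) "z \<in> X - T" | (b) v where "v \<in> T" "z = f v" unfolding Y_def by auto
    then show "PN V E z Y \<noteq> {}"
    proof cases
      case a
      have nz: "z \<notin> cnbhd V E y" if y: "y \<in> Y - {z}" for y
      proof -
        from y consider "y \<in> X - T" | v where "v \<in> T" "y = f v" unfolding Y_def by auto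
        then have "\<not> E y z"
        proof cases
          case 1 then show ?thesis using iso[of z y] a sym by auto
        next
          case 2
          have "z \<noteq> v" using a 2 by auto
          then show ?thesis using fpriv(1)[OF 2(1), of z] a 2 sym by auto
        qed
        then show ?thesis using y unfolding cnbhd_def by auto
      qed
      have "z \<in> PN V E z Y"
        unfolding PN_def cnbhd_set_def using nz by (auto simp: cnbhd_def)
      then show ?thesis by auto
    next
      case b
      have vX: "v \<in> X" using b TX by auto
      have nv: "v \<notin> cnbhd V E y" if y: "y \<in> Y - {z}" for y
      proof -
        from y consider "y \<in> X - T" | v' where "v' \<in> T" "y = f v'" "v' \<noteq> v" unfolding Y_def using b by auto
        then have "v \<noteq> y \<and> \<not> E y v"
        proof cases
          case 1 then show ?thesis using iso[of y v] vX b by auto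
        next
          case 2
          then show ?thesis using fpriv[OF 2(1) vX] sym by auto
        qed
        then show ?thesis unfolding cnbhd_def by auto
      qed
      have vz: "v \<in> cnbhd V E z" using b fE[OF b(1)] vX XV sym unfolding cnbhd_def by auto
      have "v \<in> PN V E z Y"
        unfolding PN_def cnbhd_set_def using nv vz by auto
      then show ?thesis by auto
    qed
  qed
  have IRY: "IR_set V E Y" using irrY cY cX unfolding IR_set_def by simp
  have XW: "X \<in> ?W" "Y \<in> ?W" using assms(4) IRY unfolding IR_graph_vertices_def by auto
  have Wfin: "\<forall>D\<in>?W. finite D"
    unfolding IR_graph_vertices_def IR_set_def irredundant_def using fV finite_subset by auto
  have kXY: "k \<le> card (X - Y)"
  proof -
    have "X - Y = T" unfolding Y_def using TX fnX by auto
    then show ?thesis using kT by simp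
  qed
  have dist: "k \<le> graph_dist ?W ?R X Y"
  proof -
    obtain n where "walk_between ?W ?R X Y n" using assms(2) XW unfolding graph_connected_def by blast
    then have "walk_between ?W ?R X Y (graph_dist ?W ?R X Y)"
      unfolding graph_dist_def by (rule LeastI)
    then obtain xs where xs: "is_walk ?W ?R xs" "hd xs = X" "last xs = Y"
      "length xs = Suc (graph_dist ?W ?R X Y)" unfolding walk_between_def by blast
    have "card (hd xs - last xs) \<le> length xs - 1"
      using xs(1) Wfin unfolding is_walk_def by (intro walk_card) auto
    then show ?thesis using xs kXY by simp
  qed
  have Wsub: "?W \<subseteq> Pow V"
    unfolding IR_graph_vertices_def IR_set_def irredundant_def by auto
  have fW: "finite ?W" using finite_subset[OF Wsub] fV by auto
  have fin: "finite {graph_dist ?W ?R x y | x y. x \<in> ?W \<and> y \<in> ?W}"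
  proof -
    have "{graph_dist ?W ?R x y | x y. x \<in> ?W \<and> y \<in> ?W} = (\<lambda>(x,y). graph_dist ?W ?R x y) ` (?W \<times> ?W)"
      by auto
    then show ?thesis using fW by simp
  qed
  have "graph_dist ?W ?R X Y \<le> graph_diam ?W ?R"
    unfolding graph_diam_def by (rule Max_ge[OF fin]) (use XW in blast)
  then show ?thesis using dist by simp
qed

end
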